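(* Let $\mathcal{A}=\mathbb{C}[x_{1},x_{2},x_{3}]$, $P=x_{1}x_{2}x_{3}$, let $n_{1},n_{2},n_{3}$ be positive integers and $\alpha_{1},\alpha_{2},\alpha_{3}\in\mathbb{C}$ such that $$h=\alpha_{1}P^{n_{1}}+\alpha_{2}P^{n_{2}}+\alpha_{3}P^{n_{3}}$$ is reduced, and let $D=\{h=0\}$. Put $a_{i}=\alpha_{i}P^{n_{i}-1}$ and $$\delta^{1}=x_{1}\partial_{x_{1}}-x_{2}\partial_{x_{2}},\quad \delta^{2}=x_{2}\partial_{x_{2}}-x_{3}\partial_{x_{3}},\quad \delta^{3}=a_{1}x_{1}\partial_{x_{1}}+a_{2}x_{2}\partial_{x_{2}}+a_{3}x_{3}\partial_{x_{3}}.$$ Then $\delta^{1},\delta^{2},\delta^{3}$ form a free Saito basis of $Der_{\mathcal{A}}(\log D)$: each $\delta^{i}$ satisfies $\delta^{i}(h)\in h\mathcal{A}$, the determinant of the coefficient matrix $$\begin{pmatrix} x_{1}&0&a_{1}x_{1}\\ -x_{2}&x_{2}&a_{2}x_{2}\\ 0&-x_{3}&a_{3}x_{3}\end{pmatrix}$$ equals $h$, and $\{\delta^{1},\delta^{2},\delta^{3}\}$ is a free $\mathcal{A}$-basis of $Der_{\mathcal{A}}(\log D)$.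
   Context: $Der_{\mathcal{A}}(\log D)=\{\delta\in Der_{\mathcal{A}}:\delta(h)\in h\mathcal{A}\}$ is the module of logarithmic vector fields along $D$. *)

theory Defs
  imports "HOL-Computational_Algebra.Polynomial" "HOL-Computational_Algebra.Squarefree"
begin

text \<open>The polynomial ring A = C[x1,x2,x3], realised as iterated univariate polynomials:
  the innermost variable is x1, the middle one x2, the outermost one x3.\<close>
type_synonym A = "complex poly poly poly"

definition X1 :: A where "X1 = [:[:[:0, 1:]:]:]"
definition X2 :: A where "X2 = [:[:0, 1:]:]"
definition X3 :: A where "X3 = [:0, 1:]"
definition cst :: "complex \<Rightarrow> A" where "cst c = [:[:[:c:]:]:]"

definition d1 :: "A \<Rightarrow> A" where "d1 f = map_poly (map_poly pderiv) f"
definition d2 :: "A \<Rightarrow> A" where "d2 f = map_poly pderiv f"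
definition d3 :: "A \<Rightarrow> A" where "d3 f = pderiv f"

text \<open>A derivation of A (vector field) c1 d1 + c2 d2 + c3 d3 is given by its coefficient triple.\<close>
type_synonym vf = "A \<times> A \<times> A"

definition vf_apply :: "vf \<Rightarrow> A \<Rightarrow> A" where
  "vf_apply \<delta> f = (case \<delta> of (c1, c2, c3) \<Rightarrow> c1 * d1 f + c2 * d2 f + c3 * d3 f)"

definition logder :: "A \<Rightarrow> vf set" where
  "logder h = {\<delta>. h dvd vf_apply \<delta> h}"

definition vf_comb :: "A \<Rightarrow> vf \<Rightarrow> A \<Rightarrow> vf \<Rightarrow> A \<Rightarrow> vf \<Rightarrow> vf" where
  "vf_comb f u g v k w =
     (case u of (u1, u2, u3) \<Rightarrow> case v of (v1, v2, v3) \<Rightarrow> case w of (w1, w2, w3) \<Rightarrow>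
       (f * u1 + g * v1 + k * w1, f * u2 + g * v2 + k * w2, f * u3 + g * v3 + k * w3))"

definition free_basis3 :: "vf set \<Rightarrow> vf \<Rightarrow> vf \<Rightarrow> vf \<Rightarrow> bool" where
  "free_basis3 M u v w \<longleftrightarrow> u \<in> M \<and> v \<in> M \<and> w \<in> M \<and>
     (\<forall>\<delta>\<in>M. \<exists>!(f, g, k). \<delta> = vf_comb f u g v k w)"

definition det3 :: "vf \<Rightarrow> vf \<Rightarrow> vf \<Rightarrow> A" where
  "det3 u v w = (case u of (u1, u2, u3) \<Rightarrow> case v of (v1, v2, v3) \<Rightarrow> case w of (w1, w2, w3) \<Rightarrow>
     u1 * (v2 * w3 - w2 * v3) - v1 * (u2 * w3 - w2 * u3) + w1 * (u2 * v3 - v2 * u3))"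

end

theory Submission
  imports Defs "HOL-Computational_Algebra.Computational_Algebra" "HOL-Computational_Algebra.Field_as_Ring"
begin


definition rh :: "('a::comm_ring_1 \<Rightarrow> 'b::comm_ring_1) \<Rightarrow> bool" where
  "rh f \<longleftrightarrow> f 0 = 0 \<and> f 1 = 1 \<and> (\<forall>a b. f (a+b) = f a + f b) \<and> (\<forall>a b. f (a*b) = f a * f b)"

definition der :: "('a::comm_ring_1 \<Rightarrow> 'a) \<Rightarrow> bool" where
  "der D \<longleftrightarrow> (\<forall>a b. D (a+b) = D a + D b) \<and> (\<forall>a b. D (a*b) = D a * b + a * D b)"

lemma der_0: "der D \<Longrightarrow> D 0 = 0"
proof -
  assume "der D" then have "D (0+0) = D 0 + D 0" unfolding der_def by blast
  then show ?thesis by simp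
qed

lemma der_uminus: "der D \<Longrightarrow> D (- a) = - D a"
proof -
  assume d: "der D" then have "D (a + - a) = D a + D (- a)" unfolding der_def by blast
  then show ?thesis using der_0[OF d] by (simp add: add_eq_0_iff)
qed

lemma der_diff: "der D \<Longrightarrow> D (a - b) = D a - D b"
proof -
  assume d: "der D" then have "D (a + - b) = D a + D (- b)" unfolding der_def by blast
  then show ?thesis using der_uminus[OF d] by simp
qed

lemma mp_add: "f 0 = 0 \<Longrightarrow> (\<And>a b. f (a+b) = f a + f b) \<Longrightarrow> map_poly f (p+q) = map_poly f p + map_poly f q"
  by (intro poly_eqI) (simp add: coeff_map_poly)

lemma rh_map_poly: assumes "rh f" shows "rh (map_poly f)"
proof -
  have f0: "f 0 = 0" and f1: "f 1 = 1" and fa: "\<And>a b. f (a+b) = f a + f b" and fm: "\<And>a b. f (a*b) = f a * f b"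
    using assms unfolding rh_def by auto
  have m: "map_poly f (p*q) = map_poly f p * map_poly f q" for p q
  proof (induction p)
    case 0 then show ?case by simp
  next
    case (pCons a p)
    have "map_poly f (pCons a p * q) = map_poly f (smult a q) + map_poly f (pCons 0 (p*q))"
      by (simp add: mp_add f0 fa)
    also have "\<dots> = smult (f a) (map_poly f q) + pCons 0 (map_poly f p * map_poly f q)"
      by (simp add: map_poly_smult map_poly_pCons f0 fm pCons.IH)
    finally show ?case by (simp add: map_poly_pCons f0)
  qed
  show ?thesis unfolding rh_def using f0 f1 by (simp add: mp_add fa m)
qed

lemma rh_poly: "rh (\<lambda>p. poly p x)"
  unfolding rh_def by simp

lemma mp_smult_der: "der D \<Longrightarrow> map_poly D (smult a q) = smult (D a) q + smult a (map_poly D q)"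
  by (intro poly_eqI) (simp add: coeff_map_poly der_0, simp add: der_def)

lemma der_map_poly: assumes "der D" shows "der (map_poly D)"
proof -
  have D0: "D 0 = 0" using der_0 assms .
  have fa: "\<And>a b. D (a+b) = D a + D b" using assms unfolding der_def by auto
  have m: "map_poly D (p*q) = map_poly D p * q + p * map_poly D q" for p q
  proof (induction p)
    case 0 then show ?case by simp
  next
    case (pCons a p)
    have "map_poly D (pCons a p * q) = map_poly D (smult a q) + map_poly D (pCons 0 (p*q))"
      by (simp add: mp_add D0 fa)
    also have "\<dots> = smult (D a) q + smult a (map_poly D q) + pCons 0 (map_poly D p * q + p * map_poly D q)"
      by (simp add: mp_smult_der assms map_poly_pCons D0 pCons.IH)
    finally show ?case by (simp add: map_poly_pCons D0 algebra_simps)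
  qed
  show ?thesis unfolding der_def by (simp add: mp_add D0 fa m)
qed

lemma der_pderiv: "der pderiv"
  unfolding der_def by (simp add: pderiv_add pderiv_mult algebra_simps)

lemma der_d1: "der d1" unfolding d1_def[abs_def] by (intro der_map_poly der_pderiv)
lemma der_d2: "der d2" unfolding d2_def[abs_def] by (intro der_map_poly der_pderiv)
lemma der_d3: "der d3" unfolding d3_def[abs_def] by (rule der_pderiv)

lemma der_power: "der D \<Longrightarrow> D (x ^ n) = of_nat n * x ^ (n - 1) * D x"
proof (induction n)
  case 0
  then have "D (1*1) = D 1 * 1 + 1 * D 1" unfolding der_def by blast
  then show ?case by simp
next
  case (Suc n)
  then have "D (x * x^n) = D x * x^n + x * D (x^n)" unfolding der_def by blast
  with Suc show ?case by (cases n) (simp_all add: algebra_simps)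
qed

lemma dX: "d1 X1 = 1" "d1 X2 = 0" "d1 X3 = 0" "d2 X1 = 0" "d2 X2 = 1" "d2 X3 = 0"
   "d3 X1 = 0" "d3 X2 = 0" "d3 X3 = 1" "d1 (cst c) = 0" "d2 (cst c) = 0" "d3 (cst c) = 0"
  unfolding d1_def d2_def d3_def X1_def X2_def X3_def cst_def
  by (simp_all add: map_poly_pCons pderiv_pCons one_pCons[symmetric] map_poly_1)



lemma rh_comp: "rh f \<Longrightarrow> rh g \<Longrightarrow> rh (\<lambda>x. g (f x))"
  unfolding rh_def by simp

lemma rh_cst: "rh cst"
  unfolding rh_def cst_def by (simp add: one_pCons[symmetric])

lemma rh_power: "rh f \<Longrightarrow> f (x ^ n) = f x ^ n"
  by (induction n) (simp_all add: rh_def)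

lemma rh_dvd: "rh f \<Longrightarrow> x dvd y \<Longrightarrow> f x dvd f y"
  unfolding rh_def by (metis dvd_def)

lemma X_ne: "X1 \<noteq> 0" "X2 \<noteq> 0" "X3 \<noteq> 0"
  unfolding X1_def X2_def X3_def by simp_all

definition ev0 :: "'a::comm_ring_1 poly \<Rightarrow> 'a" where "ev0 p = poly p 0"

definition phi1 :: "A \<Rightarrow> complex poly poly" where "phi1 = map_poly (map_poly ev0)"
definition phi2 :: "A \<Rightarrow> complex poly poly" where "phi2 = map_poly ev0"
definition phi3 :: "A \<Rightarrow> complex poly poly" where "phi3 = ev0"

lemma rh_ev0: "rh ev0" unfolding ev0_def[abs_def] by (rule rh_poly)
lemma rh_phi: "rh phi1" "rh phi2" "rh phi3"
  unfolding phi1_def phi2_def phi3_def by (intro rh_map_poly rh_ev0)+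

lemma phi_vals: "phi1 X1 = 0" "phi1 X2 \<noteq> 0" "phi1 X3 \<noteq> 0"
  "phi2 X2 = 0" "phi2 X1 \<noteq> 0" "phi2 X3 \<noteq> 0"
  "phi3 X3 = 0" "phi3 X1 \<noteq> 0" "phi3 X2 \<noteq> 0"
  unfolding phi1_def phi2_def phi3_def X1_def X2_def X3_def ev0_def
  by (simp_all add: map_poly_pCons)

lemma dvd_X0: "poly p (0::'a::comm_ring_1) = 0 \<Longrightarrow> [:0,1:] dvd p"
  using dvd_iff_poly_eq_0[of 0 p] by simp

lemma phi3_dvd: "phi3 f = 0 \<Longrightarrow> X3 dvd f"
  unfolding phi3_def ev0_def X3_def by (rule dvd_X0)

lemma phi2_dvd: "phi2 f = 0 \<Longrightarrow> X2 dvd f"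
  unfolding phi2_def X2_def
  by (subst const_poly_dvd_iff) (metis coeff_0 coeff_map_poly dvd_X0 ev0_def poly_0)

lemma phi1_dvd: assumes "phi1 f = 0" shows "X1 dvd f"
  unfolding X1_def
proof (subst const_poly_dvd_iff, intro allI, subst const_poly_dvd_iff, intro allI)
  fix n m
  have "coeff (phi1 f) n = 0" using assms by simp
  then have "map_poly ev0 (coeff f n) = 0" unfolding phi1_def by (simp add: coeff_map_poly ev0_def)
  then have "coeff (map_poly ev0 (coeff f n)) m = 0" by simp
  then have "poly (coeff (coeff f n) m) 0 = 0" by (simp add: coeff_map_poly ev0_def)
  then show "[:0, 1:] dvd coeff (coeff f n) m" by (rule dvd_X0)
qed

lemma deg_lin: "degree (X1 * X2 * X3 + cst c) = 1"
  unfolding X1_def X2_def X3_def cst_def by simp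

lemma not_unit_lin: "\<not> is_unit (X1 * X2 * X3 + cst c)"
proof
  assume "is_unit (X1 * X2 * X3 + cst c)"
  then obtain y where y: "(X1 * X2 * X3 + cst c) * y = 1" by (metis dvd_def mult.commute)
  then have "y \<noteq> 0" by auto
  moreover have "X1 * X2 * X3 + cst c \<noteq> 0" using deg_lin[of c] by auto
  ultimately have "degree ((X1 * X2 * X3 + cst c) * y) = 1 + degree y"
    using degree_mult_eq deg_lin by metis
  then show False using y by simp
qed

lemma cst_ofnat: "cst (of_nat n * a) = of_nat n * cst a"
  unfolding cst_def by (simp add: of_nat_poly)



lemma coprime_part:
  fixes n1 n2 n3 :: nat and \<alpha>1 \<alpha>2 \<alpha>3 :: complex
  defines "P \<equiv> X1 * X2 * X3"
  defines "h \<equiv> cst \<alpha>1 * P ^ n1 + cst \<alpha>2 * P ^ n2 + cst \<alpha>3 * P ^ n3"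
  defines "Q \<equiv> of_nat n1 * cst \<alpha>1 * P ^ (n1 - 1) + of_nat n2 * cst \<alpha>2 * P ^ (n2 - 1)
              + of_nat n3 * cst \<alpha>3 * P ^ (n3 - 1)"
  assumes sf: "squarefree h"
  shows "\<exists>u v. u * h + v * Q = 1"
proof -
  define ev where "ev p = poly (map_poly cst p) P" for p :: "complex poly"
  have rev: "rh ev" unfolding ev_def[abs_def]
    by (rule rh_comp[OF rh_map_poly[OF rh_cst] rh_poly])
  have evm: "ev (monom a n) = cst a * P ^ n" for a n
    unfolding ev_def by (simp add: map_poly_monom cst_def poly_monom)
  define H where "H = monom \<alpha>1 n1 + monom \<alpha>2 n2 + monom \<alpha>3 n3"
  have evH: "ev H = h" unfolding H_def h_def using rev by (simp add: rh_def evm)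
  have evH': "ev (pderiv H) = Q" unfolding H_def Q_def using rev
    by (simp add: rh_def evm pderiv_add pderiv_monom cst_ofnat)
  have h0: "h \<noteq> 0" using sf by auto
  have H0: "H \<noteq> 0" using h0 evH rev by (auto simp: rh_def)
  have nsq: "\<not> [:-r, 1:] ^ 2 dvd H" for r
  proof
    assume "[:-r, 1:] ^ 2 dvd H"
    then have "ev [:-r,1:] ^ 2 dvd h" using rh_dvd[OF rev] rh_power[OF rev] evH by metis
    then have "is_unit (ev [:-r,1:])" using sf unfolding squarefree_def by blast
    moreover have "ev [:-r,1:] = X1 * X2 * X3 + cst (-r)"
      unfolding ev_def P_def by (simp add: map_poly_pCons cst_def algebra_simps one_pCons[symmetric])
    ultimately show False using not_unit_lin by metis
  qed
  have "rsquarefree H"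
    unfolding rsquarefree_def
  proof (intro conjI H0 allI)
    fix a
    have "\<not> 2 \<le> order a H" using nsq[of a] order_divides[of a 2 H] H0 by auto
    then show "order a H = 0 \<or> order a H = 1" by auto
  qed
  then have nr: "\<not> (poly H a = 0 \<and> poly (pderiv H) a = 0)" for a
    using rsquarefree_roots by blast
  define G where "G = gcd H (pderiv H)"
  have G0: "G \<noteq> 0" unfolding G_def using H0 by simp
  have "degree G = 0"
  proof (rule ccontr)
    assume "degree G \<noteq> 0"
    then have "\<not> constant (poly G)" by (simp add: constant_degree)
    then obtain z where "poly G z = 0" using fundamental_theorem_of_algebra by blast
    moreover have "G dvd H" "G dvd pderiv H" unfolding G_def by simp_all
    ultimately have "poly H z = 0 \<and> poly (pderiv H) z = 0"
      by (metis dvd_def mult_eq_0_iff poly_mult)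
    then show False using nr by blast
  qed
  then have "is_unit G" using G0 is_unit_iff_degree by blast
  then have G1: "G = 1" unfolding G_def by simp
  define u where "u = fst (bezout_coefficients H (pderiv H))"
  define v where "v = snd (bezout_coefficients H (pderiv H))"
  have "u * H + v * pderiv H = 1" unfolding u_def v_def
    using bezout_coefficients_fst_snd[of H "pderiv H"] G1 G_def by simp
  then have "ev (u * H + v * pderiv H) = 1" using rev by (simp add: rh_def)
  then have "ev u * h + ev v * Q = 1" using rev evH evH' by (simp add: rh_def)
  then show ?thesis by blast
qed



lemma der_Pn:
  assumes "der D" "\<And>c. D (cst c) = 0" "Xi * D P = P"
  shows "Xi * D (cst a * P ^ n) = of_nat n * cst a * P ^ n"
proof -
  have "D (cst a * P ^ n) = cst a * (of_nat n * P ^ (n - 1) * D P)"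
    using assms(1,2) der_power[OF assms(1)] unfolding der_def by simp
  then have "Xi * D (cst a * P ^ n) = of_nat n * cst a * (P ^ (n - 1) * P)"
    using assms(3) by (simp add: algebra_simps)
  also have "\<dots> = of_nat n * cst a * P ^ n" by (cases n) (simp_all add: mult.commute)
  finally show ?thesis .
qed

lemma sum3: "der D \<Longrightarrow> Xi * D (a + b + c) = Xi * D a + Xi * D b + Xi * D c"
  unfolding der_def by (simp add: distrib_left)

theorem mainTheorem5:
  fixes n1 n2 n3 :: nat and \<alpha>1 \<alpha>2 \<alpha>3 :: complex
  assumes "n1 > 0" "n2 > 0" "n3 > 0"
  defines "P \<equiv> X1 * X2 * X3"
  defines "h \<equiv> cst \<alpha>1 * P ^ n1 + cst \<alpha>2 * P ^ n2 + cst \<alpha>3 * P ^ n3"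
  assumes "squarefree h"
  defines "a1 \<equiv> cst \<alpha>1 * P ^ (n1 - 1)"
  defines "a2 \<equiv> cst \<alpha>2 * P ^ (n2 - 1)"
  defines "a3 \<equiv> cst \<alpha>3 * P ^ (n3 - 1)"
  defines "\<delta>1 \<equiv> (X1, - X2, 0)"
  defines "\<delta>2 \<equiv> (0, X2, - X3)"
  defines "\<delta>3 \<equiv> (a1 * X1, a2 * X2, a3 * X3)"
  shows "h dvd vf_apply \<delta>1 h \<and> h dvd vf_apply \<delta>2 h \<and> h dvd vf_apply \<delta>3 h
         \<and> det3 \<delta>1 \<delta>2 \<delta>3 = h
         \<and> free_basis3 (logder h) \<delta>1 \<delta>2 \<delta>3"
proof -
  define Q where "Q \<equiv> of_nat n1 * cst \<alpha>1 * P ^ (n1 - 1) + of_nat n2 * cst \<alpha>2 * P ^ (n2 - 1)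
              + of_nat n3 * cst \<alpha>3 * P ^ (n3 - 1)"
  define E where "E \<equiv> of_nat n1 * cst \<alpha>1 * P ^ n1 + of_nat n2 * cst \<alpha>2 * P ^ n2
              + of_nat n3 * cst \<alpha>3 * P ^ n3"
  define g where "g = a1 + a2 + a3"
  have pw: "P ^ (n - 1) * P = P ^ n" if "n > 0" for n
    using that by (cases n) (simp_all add: mult.commute)
  have pws: "P^n1 = P*P^(n1-1)" "P^n2 = P*P^(n2-1)" "P^n3 = P*P^(n3-1)"
    using assms(1-3) by (simp_all add: power_eq_if)
  have EQ: "E = P * Q" unfolding E_def Q_def pws by (simp add: algebra_simps)
  have hg: "h = P * g" unfolding h_def g_def a1_def a2_def a3_def pws
    by (simp add: algebra_simps)
  have h0: "h \<noteq> 0" using \<open>squarefree h\<close> by auto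
  have g0: "g \<noteq> 0" using h0 hg by auto
  have dP1: "X1 * d1 P = P" "X2 * d2 P = P" "X3 * d3 P = P"
    unfolding P_def using der_d1 der_d2 der_d3 dX unfolding der_def by (simp_all add: algebra_simps)
  have E1: "X1 * d1 h = E" unfolding h_def E_def
    using sum3[OF der_d1] der_Pn[OF der_d1 dX(10) dP1(1)] by simp
  have E2: "X2 * d2 h = E" unfolding h_def E_def
    using sum3[OF der_d2] der_Pn[OF der_d2 dX(11) dP1(2)] by simp
  have E3: "X3 * d3 h = E" unfolding h_def E_def
    using sum3[OF der_d3] der_Pn[OF der_d3 dX(12) dP1(3)] by simp
  have D1: "d1 h = X2 * X3 * Q"
  proof -
    have "X1 * d1 h = X1 * (X2 * X3 * Q)" using E1 EQ unfolding P_def by (simp add: algebra_simps)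
    then show ?thesis using X_ne by simp
  qed
  have D2: "d2 h = X1 * X3 * Q"
  proof -
    have "X2 * d2 h = X2 * (X1 * X3 * Q)" using E2 EQ unfolding P_def by (simp add: algebra_simps)
    then show ?thesis using X_ne by simp
  qed
  have D3: "d3 h = X1 * X2 * Q"
  proof -
    have "X3 * d3 h = X3 * (X1 * X2 * Q)" using E3 EQ unfolding P_def by (simp add: algebra_simps)
    then show ?thesis using X_ne by simp
  qed
  have v1: "h dvd vf_apply \<delta>1 h" unfolding \<delta>1_def vf_apply_def using E1 E2 by simp
  have v2: "h dvd vf_apply \<delta>2 h" unfolding \<delta>2_def vf_apply_def using E2 E3 by simp
  have v3: "h dvd vf_apply \<delta>3 h"
  proof -
    have "vf_apply \<delta>3 h = a1 * (X1 * d1 h) + a2 * (X2 * d2 h) + a3 * (X3 * d3 h)"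
      unfolding \<delta>3_def vf_apply_def by (simp add: algebra_simps)
    also have "\<dots> = g * E" unfolding E1 E2 E3 g_def by (simp add: algebra_simps)
    also have "\<dots> = h * Q" using EQ hg by (simp add: algebra_simps)
    finally show ?thesis by simp
  qed
  have det: "det3 \<delta>1 \<delta>2 \<delta>3 = h"
    unfolding det3_def \<delta>1_def \<delta>2_def \<delta>3_def hg g_def P_def by (simp add: algebra_simps)
  obtain u v where uv: "u * h + v * Q = 1"
    using coprime_part[of \<alpha>1 n1 \<alpha>2 n2 \<alpha>3 n3] \<open>squarefree h\<close> unfolding h_def Q_def P_def by blast
  have uniq: "f = f' \<and> g1 = g1' \<and> k = k'"
    if "vf_comb f \<delta>1 g1 \<delta>2 k \<delta>3 = vf_comb f' \<delta>1 g1' \<delta>2 k' \<delta>3" for f g1 k f' g1' k'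
  proof -
    have c1: "X1 * (f + k * a1) = X1 * (f' + k' * a1)"
     and c2: "X2 * (- f + g1 + k * a2) = X2 * (- f' + g1' + k' * a2)"
     and c3: "X3 * (- g1 + k * a3) = X3 * (- g1' + k' * a3)"
      using that unfolding vf_comb_def \<delta>1_def \<delta>2_def \<delta>3_def by (simp_all add: algebra_simps)
    have e1: "f + k * a1 = f' + k' * a1" using c1 X_ne by simp
    have e2: "- f + g1 + k * a2 = - f' + g1' + k' * a2" using c2 X_ne by simp
    have e3: "- g1 + k * a3 = - g1' + k' * a3" using c3 X_ne by simp
    have "k * g = k' * g" unfolding g_def using e1 e2 e3 by algebra
    then have "k = k'" using g0 by simp
    then show ?thesis using e1 e3 by simp
  qed
  have ex: "\<exists>f g1 k. \<delta> = vf_comb f \<delta>1 g1 \<delta>2 k \<delta>3" if "\<delta> \<in> logder h" for \<delta>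
  proof -
    obtain c1 c2 c3 where \<delta>: "\<delta> = (c1, c2, c3)" by (cases \<delta>) auto
    define S where "S = c1 * X2 * X3 + c2 * X1 * X3 + c3 * X1 * X2"
    have "vf_apply \<delta> h = Q * S" unfolding \<delta> vf_apply_def S_def D1 D2 D3 by (simp add: algebra_simps)
    then have "h dvd Q * S" using that unfolding logder_def by simp
    then have "h dvd (S*u)*h + v*(Q*S)" by (simp add: dvd_add dvd_mult)
    moreover have "(S*u)*h + v*(Q*S) = S * (u * h + v * Q)" by (simp add: algebra_simps)
    ultimately have "h dvd S" using uv by simp
    then obtain w where w: "S = h * w" by blast
    have "phi1 S = 0"
      using rh_phi(1) phi_vals(1) unfolding w hg P_def rh_def by simp
    then have "phi1 c1 * phi1 X2 * phi1 X3 = 0"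
      using rh_phi(1) phi_vals(1) unfolding S_def rh_def by simp
    then have "phi1 c1 = 0" using phi_vals by simp
    then obtain e1 where e1: "c1 = X1 * e1" using phi1_dvd by blast
    have "phi2 S = 0"
      using rh_phi(2) phi_vals(4) unfolding w hg P_def rh_def by simp
    then have "phi2 c2 * phi2 X1 * phi2 X3 = 0"
      using rh_phi(2) phi_vals(4) unfolding S_def rh_def by simp
    then have "phi2 c2 = 0" using phi_vals by simp
    then obtain e2 where e2: "c2 = X2 * e2" using phi2_dvd by blast
    have "phi3 S = 0"
      using rh_phi(3) phi_vals(7) unfolding w hg P_def rh_def by simp
    then have "phi3 c3 * phi3 X1 * phi3 X2 = 0"
      using rh_phi(3) phi_vals(7) unfolding S_def rh_def by simp
    then have "phi3 c3 = 0" using phi_vals by simp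
    then obtain e3 where e3: "c3 = X3 * e3" using phi3_dvd by blast
    have "P * (e1 + e2 + e3) = P * (g * w)" using w unfolding S_def e1 e2 e3 hg P_def
      by (simp add: algebra_simps)
    then have sw: "e1 + e2 + e3 = g * w" using X_ne unfolding P_def by simp
    have "\<delta> = vf_comb (e1 - w * a1) \<delta>1 (w * a3 - e3) \<delta>2 w \<delta>3"
    proof -
      have "X2 * e2 = - ((e1 - w * a1) * X2) + (w * a3 - e3) * X2 + w * (a2 * X2)"
        using sw unfolding g_def by algebra
      then show ?thesis unfolding \<delta> e1 e2 e3 vf_comb_def \<delta>1_def \<delta>2_def \<delta>3_def
        by (simp add: algebra_simps)
    qed
    then show ?thesis by blast
  qed
  have fb: "free_basis3 (logder h) \<delta>1 \<delta>2 \<delta>3"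
    unfolding free_basis3_def
  proof (intro conjI ballI)
    show "\<delta>1 \<in> logder h" "\<delta>2 \<in> logder h" "\<delta>3 \<in> logder h"
      using v1 v2 v3 unfolding logder_def by simp_all
  next
    fix \<delta> assume "\<delta> \<in> logder h"
    then obtain f g1 k where eq: "\<delta> = vf_comb f \<delta>1 g1 \<delta>2 k \<delta>3" using ex by blast
    show "\<exists>!(f, g, k). \<delta> = vf_comb f \<delta>1 g \<delta>2 k \<delta>3"
    proof (rule ex1I[of _ "(f, g1, k)"])
      show "case (f, g1, k) of (f, g, k) \<Rightarrow> \<delta> = vf_comb f \<delta>1 g \<delta>2 k \<delta>3" using eq by simp
    next
      fix y assume A: "case y of (f, g, k) \<Rightarrow> \<delta> = vf_comb f \<delta>1 g \<delta>2 k \<delta>3"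
      obtain a b c where y: "y = (a, b, c)" by (cases y) auto
      have "vf_comb f \<delta>1 g1 \<delta>2 k \<delta>3 = vf_comb a \<delta>1 b \<delta>2 c \<delta>3" using A eq y by simp
      from uniq[OF this] show "y = (f, g1, k)" using y by simp
    qed
  qed
  show ?thesis using v1 v2 v3 det fb by blast
qed

end
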